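(* Let $\rho\colon\mathcal{F}\to[\Lambda]^\omega$ with $\mathcal{F}\subseteq[\Omega]^\omega$ be a partition regular function. (1) If $\rho\in(S_2)$, then $\rho\in(S_1)$. (2) For every ideal $\mathcal{I}$ on a countably infinite set $\Lambda$, the function $\rho_{\mathcal{I}}$ belongs to $(S_2)$. (3) If $\rho\in P^-$ and $\rho$ has small accretions, then $\rho\in(S_2)$.
   Context: An ideal on a nonempty set $X$ is a family $\mathcal{I}\subseteq\mathcal{P}(X)$ with $\emptyset\in\mathcal{I}$, $X\notin\mathcal{I}$, closed under finite unions and subsets, and containing all finite subsets of $X$; $\mathcal{I}^+=\mathcal{P}(X)\setminus\mathcal{I}$. $[A]^\omega$ denotes the countably infinite subsets of $A$, $[A]^{<\omega}$ the finite subsets. Partition regular function: $\Lambda,\Omega$ are countably infinite sets, $\mathcal{F}$ is a nonempty family of infinite subsets of $\Omega$ with $F\setminus K\in\mathcal{F}$ for all $F\in\mathcal{F}$ and finite $K\subseteq\Omega$. A function $\rho\colon\mathcal{F}\to[\Lambda]^\omega$ is partition regular if (M) $E\subseteq F$ implies $\rho(E)\subseteq\rho(F)$ for $E,F\in\mathcal{F}$; (R) whenever $F\in\mathcal{F}$ and $\rho(F)=A\cup B$ with $A,B\subseteq\Lambda$, there is $E\in\mathcal{F}$ with $\rho(E)\subseteq A$ or $\rho(E)\subseteq B$; (S) for every $E\in\mathcal{F}$ there is $F\in\mathcal{F}$ with $F\subseteq E$ such that for every $a\in\rho(F)$ there is a finite $K\subseteq\Omega$ with $a\notin\rho(F\setminus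 K)$. Put $\mathcal{I}_\rho=\{A\subseteq\Lambda:\forall F\in\mathcal{F}\ \rho(F)\not\subseteq A\}$ (an ideal on $\Lambda$). For an ideal $\mathcal{I}$ on $\Lambda$, $\rho_{\mathcal{I}}\colon\mathcal{I}^+\to[\Lambda]^\omega$ is $\rho_{\mathcal{I}}(A)=A$ (here $\Omega=\Lambda$, $\mathcal{F}=\mathcal{I}^+$). $\rho$ has small accretions if for every $E\in\mathcal{F}$ there is $F\in\mathcal{F}$ with $F\subseteq E$ such that $\rho(F)\setminus\rho(F\setminus K)\in\mathcal{I}_\rho$ for every finite $K\subseteq\Omega$. $\rho\in P^-$ means: for every decreasing sequence $A_0\supseteq A_1\supseteq\dots$ of subsets of $\Lambda$ with $A_0\notin\mathcal{I}_\rho$ and $A_n\setminus A_{n+1}\in\mathcal{I}_\rho$ for all $n$, there is $F\in\mathcal{F}$ with $\rho(F)\subseteq A_0$ such that for each $n$ there is a finite $K\subseteq\Omega$ with $\rho(F\setminus K)\subseteq A_n$. $\rho\in(S_1)$ means: for every $E\in\mathcal{F}$ there is $F\in\mathcal{F}$, $F\subseteq E$, such that for every $A\in\mathcal{I}_\rho$ there is $G\in\mathcal{F}$ with $\rho(G)\subseteq\rho(F)\setminus A$ and for every finite $K\subseteq\Omega$ there is a finite $L\subseteq\Omega$ with $\rho(G\setminus L)\subseteq\rho(F\setminus K)$. $\rho\in(S_2)$ means: for every $E\in\mathcal{F}$ there is $F\in\mathcal{F}$, $F\subseteq E$, such that for every $B\subseteq\rho(F)$ with $B\notin\mathcal{I}_\rho$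 there is $G\in\mathcal{F}$ with $\rho(G)\subseteq B$ and for every finite $K\subseteq\Omega$ there is a finite $L\subseteq\Omega$ with $\rho(G\setminus L)\subseteq\rho(F\setminus K)$. *)

theory Defs
  imports Main "HOL-Library.Countable_Set"
begin

text \<open>The sets Lambda and Omega are modelled as (countably infinite) types
'l and 'o.  [Lambda]^omega is the set of infinite subsets of 'l (countability
is automatic since 'l is countable).\<close>

definition is_ideal :: "'a set set \<Rightarrow> bool" where
  "is_ideal I \<longleftrightarrow> {} \<in> I \<and> UNIV \<notin> I
     \<and> (\<forall>A\<in>I. \<forall>B\<in>I. A \<union> B \<in> I)
     \<and> (\<forall>A\<in>I. \<forall>B. B \<subseteq> A \<longrightarrow> B \<in> I)
     \<and> (\<forall>A. finite A \<longrightarrow> A \<in> I)"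

definition partition_regular :: "'o set set \<Rightarrow> ('o set \<Rightarrow> 'l set) \<Rightarrow> bool" where
  "partition_regular \<F> \<rho> \<longleftrightarrow>
     \<F> \<noteq> {} \<and> (\<forall>F\<in>\<F>. infinite F)
     \<and> (\<forall>F\<in>\<F>. \<forall>K. finite K \<longrightarrow> F - K \<in> \<F>)
     \<and> (\<forall>F\<in>\<F>. infinite (\<rho> F))
     \<comment> \<open>(M)\<close>
     \<and> (\<forall>E\<in>\<F>. \<forall>F\<in>\<F>. E \<subseteq> F \<longrightarrow> \<rho> E \<subseteq> \<rho> F)
     \<comment> \<open>(R)\<close>
     \<and> (\<forall>F\<in>\<F>. \<forall>A B. \<rho> F = A \<union> B \<longrightarrow>
           (\<exists>E\<in>\<F>. \<rho> E \<subseteq> A \<or> \<rho> E \<subseteq> B))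
     \<comment> \<open>(S)\<close>
     \<and> (\<forall>E\<in>\<F>. \<exists>F\<in>\<F>. F \<subseteq> E \<and>
           (\<forall>a\<in>\<rho> F. \<exists>K. finite K \<and> a \<notin> \<rho> (F - K)))"

definition I_rho :: "'o set set \<Rightarrow> ('o set \<Rightarrow> 'l set) \<Rightarrow> 'l set set" where
  "I_rho \<F> \<rho> = {A. \<forall>F\<in>\<F>. \<not> \<rho> F \<subseteq> A}"

definition small_accretions :: "'o set set \<Rightarrow> ('o set \<Rightarrow> 'l set) \<Rightarrow> bool" where
  "small_accretions \<F> \<rho> \<longleftrightarrow>
     (\<forall>E\<in>\<F>. \<exists>F\<in>\<F>. F \<subseteq> E \<and>
        (\<forall>K. finite K \<longrightarrow> \<rho> F - \<rho> (F - K) \<in> I_rho \<F> \<rho>))"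

definition P_minus :: "'o set set \<Rightarrow> ('o set \<Rightarrow> 'l set) \<Rightarrow> bool" where
  "P_minus \<F> \<rho> \<longleftrightarrow>
     (\<forall>A :: nat \<Rightarrow> 'l set. (\<forall>n. A (Suc n) \<subseteq> A n) \<and> A 0 \<notin> I_rho \<F> \<rho>
        \<and> (\<forall>n. A n - A (Suc n) \<in> I_rho \<F> \<rho>) \<longrightarrow>
        (\<exists>F\<in>\<F>. \<rho> F \<subseteq> A 0 \<and>
           (\<forall>n. \<exists>K. finite K \<and> \<rho> (F - K) \<subseteq> A n)))"

definition S1 :: "'o set set \<Rightarrow> ('o set \<Rightarrow> 'l set) \<Rightarrow> bool" where
  "S1 \<F> \<rho> \<longleftrightarrow>
     (\<forall>E\<in>\<F>. \<exists>F\<in>\<F>. F \<subseteq> E \<and>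
        (\<forall>A\<in>I_rho \<F> \<rho>. \<exists>G\<in>\<F>. \<rho> G \<subseteq> \<rho> F - A \<and>
           (\<forall>K. finite K \<longrightarrow> (\<exists>L. finite L \<and> \<rho> (G - L) \<subseteq> \<rho> (F - K)))))"

definition S2 :: "'o set set \<Rightarrow> ('o set \<Rightarrow> 'l set) \<Rightarrow> bool" where
  "S2 \<F> \<rho> \<longleftrightarrow>
     (\<forall>E\<in>\<F>. \<exists>F\<in>\<F>. F \<subseteq> E \<and>
        (\<forall>B. B \<subseteq> \<rho> F \<and> B \<notin> I_rho \<F> \<rho> \<longrightarrow>
           (\<exists>G\<in>\<F>. \<rho> G \<subseteq> B \<and>
              (\<forall>K. finite K \<longrightarrow> (\<exists>L. finite L \<and> \<rho> (G - L) \<subseteq> \<rho> (F - K))))))"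

definition rho_ideal :: "'l set set \<Rightarrow> 'l set \<Rightarrow> 'l set" where
  "rho_ideal I = (\<lambda>A. A)"

definition ideal_plus :: "'l set set \<Rightarrow> 'l set set" where
  "ideal_plus I = {A. A \<notin> I}"

end

theory Submission
  imports Defs
begin


lemma part1:
  assumes pr: "partition_regular \<F> \<rho>" and s2: "S2 \<F> \<rho>"
  shows "S1 \<F> \<rho>"
  unfolding S1_def
proof
  fix E assume "E \<in> \<F>"
  with s2 have "\<exists>F\<in>\<F>. F \<subseteq> E \<and>
        (\<forall>B. B \<subseteq> \<rho> F \<and> B \<notin> I_rho \<F> \<rho> \<longrightarrow>
           (\<exists>G\<in>\<F>. \<rho> G \<subseteq> B \<and>
              (\<forall>K. finite K \<longrightarrow> (\<exists>L. finite L \<and> \<rho> (G - L) \<subseteq> \<rho> (F - K)))))"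
    unfolding S2_def by (rule bspec)
  then obtain F where F: "F \<in> \<F>" "F \<subseteq> E" and
    H: "\<forall>B. B \<subseteq> \<rho> F \<and> B \<notin> I_rho \<F> \<rho> \<longrightarrow>
           (\<exists>G\<in>\<F>. \<rho> G \<subseteq> B \<and>
              (\<forall>K. finite K \<longrightarrow> (\<exists>L. finite L \<and> \<rho> (G - L) \<subseteq> \<rho> (F - K))))"
    by (elim bexE conjE)
  have "\<forall>A\<in>I_rho \<F> \<rho>. \<exists>G\<in>\<F>. \<rho> G \<subseteq> \<rho> F - A \<and>
           (\<forall>K. finite K \<longrightarrow> (\<exists>L. finite L \<and> \<rho> (G - L) \<subseteq> \<rho> (F - K)))"
  proof
    fix A assume A: "A \<in> I_rho \<F> \<rho>"
    have "\<rho> F - A \<notin> I_rho \<F> \<rho>"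
    proof
      assume B: "\<rho> F - A \<in> I_rho \<F> \<rho>"
      have eq: "\<rho> F = (\<rho> F - A) \<union> (\<rho> F \<inter> A)" by blast
      have R: "\<forall>F\<in>\<F>. \<forall>A B. \<rho> F = A \<union> B \<longrightarrow>
           (\<exists>E\<in>\<F>. \<rho> E \<subseteq> A \<or> \<rho> E \<subseteq> B)"
        using pr unfolding partition_regular_def by (elim conjE) assumption
      note R' = R[rule_format, OF F(1) eq]
      then obtain E' where E': "E' \<in> \<F>" "\<rho> E' \<subseteq> \<rho> F - A \<or> \<rho> E' \<subseteq> \<rho> F \<inter> A"
        by blast
      have "\<not> \<rho> E' \<subseteq> \<rho> F - A" using B E'(1) unfolding I_rho_def by simp
      moreover have "\<not> \<rho> E' \<subseteq> A" using A E'(1) unfolding I_rho_def by simp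
      ultimately show False using E'(2) by blast
    qed
    then show "\<exists>G\<in>\<F>. \<rho> G \<subseteq> \<rho> F - A \<and>
           (\<forall>K. finite K \<longrightarrow> (\<exists>L. finite L \<and> \<rho> (G - L) \<subseteq> \<rho> (F - K)))"
      using H[rule_format, of "\<rho> F - A"] by blast
  qed
  then show "\<exists>F\<in>\<F>. F \<subseteq> E \<and> (\<forall>A\<in>I_rho \<F> \<rho>. \<exists>G\<in>\<F>. \<rho> G \<subseteq> \<rho> F - A \<and>
           (\<forall>K. finite K \<longrightarrow> (\<exists>L. finite L \<and> \<rho> (G - L) \<subseteq> \<rho> (F - K))))"
    using F by (intro bexI[of _ F] conjI)
qed




lemma part2:
  assumes "is_ideal I"
  shows "S2 (ideal_plus I) (rho_ideal I)"
  unfolding S2_def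
proof
  fix E assume E: "E \<in> ideal_plus I"
  have "\<forall>B. B \<subseteq> rho_ideal I E \<and> B \<notin> I_rho (ideal_plus I) (rho_ideal I) \<longrightarrow>
           (\<exists>G\<in>ideal_plus I. rho_ideal I G \<subseteq> B \<and>
              (\<forall>K. finite K \<longrightarrow> (\<exists>L. finite L \<and> rho_ideal I (G - L) \<subseteq> rho_ideal I (E - K))))"
  proof (intro allI impI)
    fix B assume B: "B \<subseteq> rho_ideal I E \<and> B \<notin> I_rho (ideal_plus I) (rho_ideal I)"
    then obtain F where "F \<notin> I" "F \<subseteq> B"
      unfolding I_rho_def ideal_plus_def rho_ideal_def by auto
    then have "B \<notin> I" using assms unfolding is_ideal_def by blast
    then show "\<exists>G\<in>ideal_plus I. rho_ideal I G \<subseteq> B \<and>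
              (\<forall>K. finite K \<longrightarrow> (\<exists>L. finite L \<and> rho_ideal I (G - L) \<subseteq> rho_ideal I (E - K)))"
      using B by (intro bexI[of _ B]) (auto simp: ideal_plus_def rho_ideal_def)
  qed
  then show "\<exists>F\<in>ideal_plus I. F \<subseteq> E \<and> (\<forall>B. B \<subseteq> rho_ideal I F \<and> B \<notin> I_rho (ideal_plus I) (rho_ideal I) \<longrightarrow>
           (\<exists>G\<in>ideal_plus I. rho_ideal I G \<subseteq> B \<and>
              (\<forall>K. finite K \<longrightarrow> (\<exists>L. finite L \<and> rho_ideal I (G - L) \<subseteq> rho_ideal I (F - K)))))"
    using E by blast
qed




lemma part3:
  fixes \<F> :: "'o set set" and \<rho> :: "'o set \<Rightarrow> 'l set"
  assumes cO: "countable (UNIV :: 'o set)"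
    and pr: "partition_regular \<F> \<rho>" and pm: "P_minus \<F> \<rho>" and sa: "small_accretions \<F> \<rho>"
  shows "S2 \<F> \<rho>"
  unfolding S2_def
proof
  obtain f :: "'o \<Rightarrow> nat" where inj: "inj f" using cO unfolding countable_def by blast
  define Kn where "Kn n = {x. f x < n}" for n
  have finK: "finite (Kn n)" for n
  proof -
    have "Kn n = f -` {..<n}" unfolding Kn_def by auto
    then show ?thesis using finite_vimageI[OF _ inj] by simp
  qed
  have cover: "\<exists>n. K \<subseteq> Kn n" if fK: "finite K" for K
  proof -
    obtain k where "f ` K \<subseteq> {..<k}" using finite_nat_bounded[OF finite_imageI[OF fK, of f]] by blast
    then have "K \<subseteq> Kn k" unfolding Kn_def by auto
    then show ?thesis by (rule exI)
  qed
  have K0: "Kn 0 = {}" unfolding Kn_def by simp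
  have Kmono: "Kn n \<subseteq> Kn (Suc n)" for n unfolding Kn_def by auto
  have cof0: "\<forall>F\<in>\<F>. \<forall>K. finite K \<longrightarrow> F - K \<in> \<F>"
    using pr unfolding partition_regular_def by (elim conjE) assumption
  have mon0: "\<forall>E\<in>\<F>. \<forall>F\<in>\<F>. E \<subseteq> F \<longrightarrow> \<rho> E \<subseteq> \<rho> F"
    using pr unfolding partition_regular_def by (elim conjE) assumption
  have cof: "\<And>F K. F \<in> \<F> \<Longrightarrow> finite K \<Longrightarrow> F - K \<in> \<F>" using cof0 by simp
  have mon: "\<And>E F. E \<in> \<F> \<Longrightarrow> F \<in> \<F> \<Longrightarrow> E \<subseteq> F \<Longrightarrow> \<rho> E \<subseteq> \<rho> F"
    using mon0 by simp
  fix E assume "E \<in> \<F>"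
  with sa have "\<exists>F\<in>\<F>. F \<subseteq> E \<and>
        (\<forall>K. finite K \<longrightarrow> \<rho> F - \<rho> (F - K) \<in> I_rho \<F> \<rho>)"
    unfolding small_accretions_def by (rule bspec)
  then obtain F where F: "F \<in> \<F>" "F \<subseteq> E" and
    acc: "\<forall>K. finite K \<longrightarrow> \<rho> F - \<rho> (F - K) \<in> I_rho \<F> \<rho>"
    by (elim bexE conjE)
  have "\<forall>B. B \<subseteq> \<rho> F \<and> B \<notin> I_rho \<F> \<rho> \<longrightarrow>
           (\<exists>G\<in>\<F>. \<rho> G \<subseteq> B \<and>
              (\<forall>K. finite K \<longrightarrow> (\<exists>L. finite L \<and> \<rho> (G - L) \<subseteq> \<rho> (F - K))))"
  proof (intro allI impI)
    fix B assume B: "B \<subseteq> \<rho> F \<and> B \<notin> I_rho \<F> \<rho>"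
    define A where "A n = B \<inter> \<rho> (F - Kn n)" for n
    have A0: "A 0 = B" using B unfolding A_def K0 by auto
    have dec: "\<forall>n. A (Suc n) \<subseteq> A n"
    proof
      fix n
      have "\<rho> (F - Kn (Suc n)) \<subseteq> \<rho> (F - Kn n)"
        using mon[OF cof[OF F(1) finK] cof[OF F(1) finK]] Kmono[of n] by blast
      then show "A (Suc n) \<subseteq> A n" unfolding A_def by blast
    qed
    have diff: "\<forall>n. A n - A (Suc n) \<in> I_rho \<F> \<rho>"
    proof
      fix n
      have "A n - A (Suc n) \<subseteq> \<rho> F - \<rho> (F - Kn (Suc n))" unfolding A_def using B by blast
      then show "A n - A (Suc n) \<in> I_rho \<F> \<rho>"
        using acc finK unfolding I_rho_def by blast
    qed
    obtain G where G: "G \<in> \<F>" "\<rho> G \<subseteq> A 0" and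
      Gn: "\<forall>n. \<exists>K. finite K \<and> \<rho> (G - K) \<subseteq> A n"
      using pm[unfolded P_minus_def, rule_format, of A] dec diff B A0 by auto
    have "\<forall>K. finite K \<longrightarrow> (\<exists>L. finite L \<and> \<rho> (G - L) \<subseteq> \<rho> (F - K))"
    proof (intro allI impI)
      fix K :: "'o set" assume K: "finite K"
      obtain n where n: "K \<subseteq> Kn n" using cover[OF K] by blast
      obtain L where L: "finite L" "\<rho> (G - L) \<subseteq> A n" using Gn by blast
      have "\<rho> (F - Kn n) \<subseteq> \<rho> (F - K)"
        using mon[OF cof[OF F(1) finK] cof[OF F(1) K]] n by blast
      then show "\<exists>L. finite L \<and> \<rho> (G - L) \<subseteq> \<rho> (F - K)"
        using L unfolding A_def by blast
    qed
    then show "\<exists>G\<in>\<F>. \<rho> G \<subseteq> B \<and>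
              (\<forall>K. finite K \<longrightarrow> (\<exists>L. finite L \<and> \<rho> (G - L) \<subseteq> \<rho> (F - K)))"
      using G A0 by blast
  qed
  then show "\<exists>F\<in>\<F>. F \<subseteq> E \<and> (\<forall>B. B \<subseteq> \<rho> F \<and> B \<notin> I_rho \<F> \<rho> \<longrightarrow>
           (\<exists>G\<in>\<F>. \<rho> G \<subseteq> B \<and>
              (\<forall>K. finite K \<longrightarrow> (\<exists>L. finite L \<and> \<rho> (G - L) \<subseteq> \<rho> (F - K)))))"
    using F by (intro bexI[of _ F] conjI)
qed


theorem proposition2p6:
  fixes \<F> :: "'o set set" and \<rho> :: "'o set \<Rightarrow> 'l set"
  assumes "countable (UNIV :: 'o set)" and "infinite (UNIV :: 'o set)"
      and "countable (UNIV :: 'l set)" and "infinite (UNIV :: 'l set)"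
  shows "(partition_regular \<F> \<rho> \<and> S2 \<F> \<rho> \<longrightarrow> S1 \<F> \<rho>)
       \<and> (\<forall>I :: 'l set set. is_ideal I \<longrightarrow> S2 (ideal_plus I) (rho_ideal I))
       \<and> (partition_regular \<F> \<rho> \<and> P_minus \<F> \<rho> \<and> small_accretions \<F> \<rho>
            \<longrightarrow> S2 \<F> \<rho>)"
  using part1 part2 part3[OF assms(1)] by blast

end
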